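(* Let $d\in\mathbb Z$ and let $P:k((z))\to k((z))$ be a $k$-linear operator of the form $P(\sum_\beta c_\beta z^\beta)=\sum_\beta c_\beta\sum_{i\ge0}p_i(\beta)z^{\beta+d+i}$ with $p_0(\beta)=1$ for all $\beta$ and each $p_i(\beta)$ a polynomial in $\beta$. For integers $\alpha\ge0$ write $P^\alpha(\sum_\beta c_\beta z^\beta)=\sum_\beta c_\beta\sum_{i\ge0}p_i(\alpha,\beta)z^{\beta+\alpha d+i}$. Then for every $i$, $p_i(\alpha,\beta)$ is given by a polynomial in $\alpha$ and $\beta$.
   Context: $k$ is a field of characteristic zero. The coefficients $p_i(\alpha,\beta)$ are defined for integers $\alpha\ge0,\beta$ by the displayed expansion of the $\alpha$-th power of $P$ (so $p_i(1,\beta)=p_i(\beta)$, $p_0(0,\beta)=1$, $p_i(0,\beta)=0$ for $i>0$). *)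

theory Defs
  imports "HOL-Computational_Algebra.Formal_Laurent_Series"
begin

text \<open>The operator P on k((z)) determined by the shift d and the coefficient
  polynomials p i:  P(sum_b c_b z^b) = sum_b c_b sum_i (p i)(b) z^(b+d+i).\<close>

definition laurent_op_coeffs ::
  "int \<Rightarrow> (nat \<Rightarrow> 'a::comm_ring_1 poly) \<Rightarrow> 'a fls \<Rightarrow> int \<Rightarrow> 'a" where
  "laurent_op_coeffs d p f n =
     (\<Sum>b\<in>{fls_subdegree f..n - d}. fls_nth f b * poly (p (nat (n - d - b))) (of_int b))"

lemma laurent_op_coeffs_wd:
  "laurent_op_coeffs d p f \<in> {g. \<forall>\<^sub>\<infinity> n::nat. g (- int n) = 0}"
proof -
  have "\<forall>n > nat (\<bar>d\<bar> + \<bar>fls_subdegree f\<bar>). laurent_op_coeffs d p f (- int n) = 0"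
    by (auto simp: laurent_op_coeffs_def)
  then show ?thesis by (auto simp: MOST_nat)
qed

definition laurent_op :: "int \<Rightarrow> (nat \<Rightarrow> 'a::comm_ring_1 poly) \<Rightarrow> 'a fls \<Rightarrow> 'a fls" where
  "laurent_op d p f = Abs_fls (laurent_op_coeffs d p f)"

lemma fls_nth_laurent_op:
  "fls_nth (laurent_op d p f) n = laurent_op_coeffs d p f n"
  using laurent_op_coeffs_wd[of d p f]
  by (simp add: laurent_op_def Abs_fls_inverse)

definition pcoeff :: "int \<Rightarrow> (nat \<Rightarrow> 'a::comm_ring_1 poly) \<Rightarrow> nat \<Rightarrow> nat \<Rightarrow> int \<Rightarrow> 'a" where
  "pcoeff d p i \<alpha> \<beta> = fls_nth ((laurent_op d p ^^ \<alpha>) (fls_X_intpow \<beta>)) (\<beta> + int \<alpha> * d + int i)"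

end

theory Submission
  imports Defs
begin

definition E :: "'a::comm_ring_1 poly poly \<Rightarrow> nat \<Rightarrow> int \<Rightarrow> 'a" where
  "E Q x y = poly (poly Q [:of_int y:]) (of_nat x)"

definition bipoly :: "(nat \<Rightarrow> int \<Rightarrow> 'a::comm_ring_1) \<Rightarrow> bool" where
  "bipoly f \<longleftrightarrow> (\<exists>Q. \<forall>x y. f x y = E Q x y)"

lemma bipoly_const: "bipoly (\<lambda>x y. c)"
  unfolding bipoly_def E_def by (rule exI[of _ "[:[:c:]:]"]) simp

lemma bipoly_x: "bipoly (\<lambda>x y. of_nat x)"
  unfolding bipoly_def E_def by (rule exI[of _ "[:[:0,1:]:]"]) simp

lemma bipoly_y: "bipoly (\<lambda>x y. of_int y)"
  unfolding bipoly_def E_def by (rule exI[of _ "[:0,1:]"]) simp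

lemma bipoly_add: "bipoly f \<Longrightarrow> bipoly g \<Longrightarrow> bipoly (\<lambda>x y. f x y + g x y)"
  unfolding bipoly_def E_def
  by (metis poly_add)

lemma bipoly_mult: "bipoly f \<Longrightarrow> bipoly g \<Longrightarrow> bipoly (\<lambda>x y. f x y * g x y)"
  unfolding bipoly_def E_def
  by (metis poly_mult)

lemma bipoly_sum: "finite A \<Longrightarrow> (\<And>a. a \<in> A \<Longrightarrow> bipoly (f a)) \<Longrightarrow> bipoly (\<lambda>x y. \<Sum>a\<in>A. f a x y)"
  by (induction A rule: finite_induct) (auto intro: bipoly_add bipoly_const)

lemma bipoly_poly: "bipoly f \<Longrightarrow> bipoly (\<lambda>x y. poly r (f x y))"
proof (induction r)
  case 0 then show ?case by (simp add: bipoly_const)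
next
  case (pCons a r)
  then show ?case by (simp add: bipoly_add bipoly_mult bipoly_const)
qed

lemma bipoly_power: "bipoly f \<Longrightarrow> bipoly (\<lambda>x y. f x y ^ k)"
  by (induction k) (auto intro: bipoly_mult bipoly_const)

lemma poly_sum_N: "degree (p::'a::comm_ring_1 poly) \<le> N \<Longrightarrow> poly p x = (\<Sum>i\<le>N. coeff p i * x ^ i)"
proof -
  assume "degree p \<le> N"
  then have "(\<Sum>i\<le>degree p. coeff p i * x ^ i) = (\<Sum>i\<le>N. coeff p i * x ^ i)"
    by (intro sum.mono_neutral_left) (auto simp: coeff_eq_0)
  then show ?thesis by (simp add: poly_altdef)
qed

lemma bipoly_nf:
  assumes "bipoly f"
  shows "\<exists>(N::nat) c. \<forall>x y. f x y = (\<Sum>a\<le>N. \<Sum>b\<le>N. c a b * of_nat x ^ a * of_int y ^ b)"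
proof -
  obtain Q where Q: "\<And>x y. f x y = E Q x y" using assms unfolding bipoly_def by blast
  define N where "N = degree Q + (\<Sum>b\<le>degree Q. degree (coeff Q b))"
  have dQ: "degree Q \<le> N" unfolding N_def by simp
  have dc: "degree (coeff Q b) \<le> N" for b
  proof (cases "b \<le> degree Q")
    case True
    have "degree (coeff Q b) \<le> (\<Sum>b\<le>degree Q. degree (coeff Q b))"
      by (rule member_le_sum) (use True in auto)
    then show ?thesis unfolding N_def by simp
  next
    case False then show ?thesis by (simp add: coeff_eq_0)
  qed
  have "f x y = (\<Sum>a\<le>N. \<Sum>b\<le>N. coeff (coeff Q b) a * of_nat x ^ a * of_int y ^ b)" for x y
  proof -
    have "f x y = poly (\<Sum>b\<le>N. coeff Q b * [:of_int y:] ^ b) (of_nat x)"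
      unfolding Q E_def using poly_sum_N[OF dQ] by metis
    also have "\<dots> = (\<Sum>b\<le>N. poly (coeff Q b) (of_nat x) * of_int y ^ b)"
      by (simp add: poly_sum poly_power)
    also have "\<dots> = (\<Sum>b\<le>N. \<Sum>a\<le>N. coeff (coeff Q b) a * of_nat x ^ a * of_int y ^ b)"
      by (simp add: poly_sum_N[OF dc] sum_distrib_right)
    also have "\<dots> = (\<Sum>a\<le>N. \<Sum>b\<le>N. coeff (coeff Q b) a * of_nat x ^ a * of_int y ^ b)"
      by (rule sum.swap)
    finally show ?thesis .
  qed
  then show ?thesis by (intro exI[of _ N] exI[of _ "\<lambda>a b. coeff (coeff Q b) a"]) simp
qed

lemma bipoly_cong: "bipoly f \<Longrightarrow> (\<And>x y. g x y = f x y) \<Longrightarrow> bipoly g"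
  unfolding bipoly_def by metis

lemma faulhaber: "bipoly (\<lambda>x (y::int). (\<Sum>t<x. of_nat t ^ k) :: 'a::field_char_0)"
proof (induction k rule: less_induct)
  case (less k)
  define S where "S j x = (\<Sum>t<x. of_nat t ^ j :: 'a)" for j x
  have key: "of_nat x ^ Suc k = (\<Sum>j\<le>k. of_nat (Suc k choose j) * S j x)" for x
  proof -
    have "of_nat x ^ Suc k = (\<Sum>t<x. (of_nat (Suc t) ^ Suc k - of_nat t ^ Suc k :: 'a))"
      by (subst sum_lessThan_telescope[where f = "\<lambda>t. of_nat t ^ Suc k"]) simp
    also have "\<dots> = (\<Sum>t<x. \<Sum>j\<le>k. of_nat (Suc k choose j) * of_nat t ^ j)"
    proof (rule sum.cong[OF refl])
      fix t
      have "(of_nat t + 1 :: 'a) ^ Suc k = (\<Sum>j\<le>Suc k. of_nat (Suc k choose j) * of_nat t ^ j * 1 ^ (Suc k - j))"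
        by (rule binomial_ring)
      then show "(of_nat (Suc t) ^ Suc k - of_nat t ^ Suc k :: 'a) = (\<Sum>j\<le>k. of_nat (Suc k choose j) * of_nat t ^ j)"
        by (simp add: algebra_simps)
    qed
    also have "\<dots> = (\<Sum>j\<le>k. of_nat (Suc k choose j) * S j x)"
      unfolding S_def by (subst sum.swap) (simp add: sum_distrib_left)
    finally show ?thesis .
  qed
  have eq: "S k x = (of_nat x ^ Suc k + (-1) * (\<Sum>j<k. of_nat (Suc k choose j) * S j x)) * (1 / of_nat (Suc k))" for x
  proof -
    have "of_nat x ^ Suc k = (\<Sum>j<k. of_nat (Suc k choose j) * S j x) + of_nat (Suc k) * S k x"
      unfolding key by (simp add: lessThan_Suc_atMost[symmetric])
    then show ?thesis by (simp add: field_simps del: of_nat_Suc)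
  qed
  have "bipoly (\<lambda>x (y::int). (of_nat x ^ Suc k + (-1) * (\<Sum>j<k. of_nat (Suc k choose j) * S j x)) * (1 / of_nat (Suc k) :: 'a))"
    using less unfolding S_def
    by (intro bipoly_mult bipoly_add bipoly_power bipoly_x bipoly_const bipoly_sum) auto
  then show ?case by (rule bipoly_cong) (use eq in \<open>simp add: S_def\<close>)
qed

lemma bipoly_summation:
  assumes "bipoly (f :: nat \<Rightarrow> int \<Rightarrow> 'a::field_char_0)"
  shows "bipoly (\<lambda>x y. \<Sum>t<x. f t y)"
proof -
  obtain N c where nf: "\<And>x y. f x y = (\<Sum>a\<le>N. \<Sum>b\<le>N. c a b * of_nat x ^ a * of_int y ^ b)"
    using bipoly_nf[OF assms] by blast
  have "(\<Sum>t<x. f t y) = (\<Sum>a\<le>N. \<Sum>b\<le>N. c a b * (\<Sum>t<x. of_nat t ^ a) * of_int y ^ b)" for x y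
    unfolding nf
    by (simp add: sum.swap[of _ "{..<x}"] sum_distrib_left sum_distrib_right mult.assoc)
  moreover have "bipoly (\<lambda>x y. \<Sum>a\<le>N. \<Sum>b\<le>N. c a b * (\<Sum>t<x. of_nat t ^ a) * of_int y ^ b :: 'a)"
    by (intro bipoly_sum bipoly_mult bipoly_const faulhaber bipoly_power bipoly_y) auto
  ultimately show ?thesis by simp
qed

lemma sum_int_interval:
  "(\<Sum>b\<in>{m..m + int i}. g b) = (\<Sum>j\<le>i. g (m + int j))"
proof -
  have "{m..m + int i} = (\<lambda>j. m + int j) ` {..i}"
  proof (intro set_eqI iffI)
    fix b assume "b \<in> {m..m + int i}"
    then show "b \<in> (\<lambda>j. m + int j) ` {..i}"
      by (intro image_eqI[of _ _ "nat (b - m)"]) auto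
  qed auto
  moreover have "inj_on (\<lambda>j. m + int j) {..i}" by (auto simp: inj_on_def)
  ultimately show ?thesis by (simp add: sum.reindex)
qed

lemma laurent_shift:
  assumes "\<And>b. b < m \<Longrightarrow> fls_nth f b = 0"
  shows "laurent_op_coeffs d p f n = (\<Sum>b\<in>{m..n-d}. fls_nth f b * poly (p (nat (n - d - b))) (of_int b))"
proof -
  let ?g = "\<lambda>b. fls_nth f b * poly (p (nat (n - d - b))) (of_int b)"
  let ?s = "fls_subdegree f"
  have "sum ?g {?s..n-d} = sum ?g {min m ?s..n-d}"
    by (intro sum.mono_neutral_left) auto
  moreover have "sum ?g {m..n-d} = sum ?g {min m ?s..n-d}"
    by (intro sum.mono_neutral_left) (auto simp: assms)
  ultimately show ?thesis unfolding laurent_op_coeffs_def by simp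
qed

lemma F_vanish:
  "\<forall>n < \<beta> + int \<alpha> * d. fls_nth ((laurent_op d p ^^ \<alpha>) (fls_X_intpow \<beta>)) n = 0"
proof (induction \<alpha>)
  case 0 then show ?case by simp
next
  case (Suc \<alpha>)
  show ?case
  proof (intro allI impI)
    fix n assume n: "n < \<beta> + int (Suc \<alpha>) * d"
    have "fls_nth ((laurent_op d p ^^ Suc \<alpha>) (fls_X_intpow \<beta>)) n
       = laurent_op_coeffs d p ((laurent_op d p ^^ \<alpha>) (fls_X_intpow \<beta>)) n"
      by (simp add: fls_nth_laurent_op)
    also have "\<dots> = (\<Sum>b\<in>{\<beta> + int \<alpha> * d..n-d}. fls_nth ((laurent_op d p ^^ \<alpha>) (fls_X_intpow \<beta>)) b * poly (p (nat (n - d - b))) (of_int b))"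
      by (rule laurent_shift) (use Suc in auto)
    also have "\<dots> = 0" using n by (simp add: algebra_simps)
    finally show "fls_nth ((laurent_op d p ^^ Suc \<alpha>) (fls_X_intpow \<beta>)) n = 0" .
  qed
qed

lemma pcoeff_Suc:
  "pcoeff d p i (Suc \<alpha>) \<beta> = (\<Sum>j\<le>i. pcoeff d p j \<alpha> \<beta> * poly (p (i - j)) (of_int (\<beta> + int \<alpha> * d + int j)))"
proof -
  define F where "F = (laurent_op d p ^^ \<alpha>) (fls_X_intpow \<beta>)"
  define m where "m = \<beta> + int \<alpha> * d"
  have n: "\<beta> + int (Suc \<alpha>) * d + int i = m + int i + d"
    unfolding m_def by (simp add: algebra_simps)
  have v: "\<And>b. b < m \<Longrightarrow> fls_nth F b = 0"
    using F_vanish[of \<beta> \<alpha> d p] unfolding F_def m_def by blast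
  have "pcoeff d p i (Suc \<alpha>) \<beta> = laurent_op_coeffs d p F (m + int i + d)"
    unfolding pcoeff_def n by (simp add: fls_nth_laurent_op F_def)
  also have "\<dots> = (\<Sum>b\<in>{m..m + int i}. fls_nth F b * poly (p (nat (m + int i + d - d - b))) (of_int b))"
    using laurent_shift[of m F d p "m + int i + d", OF v] by simp
  also have "\<dots> = (\<Sum>j\<le>i. fls_nth F (m + int j) * poly (p (nat (m + int i + d - d - (m + int j)))) (of_int (m + int j)))"
    by (rule sum_int_interval)
  also have "\<dots> = (\<Sum>j\<le>i. pcoeff d p j \<alpha> \<beta> * poly (p (i - j)) (of_int (\<beta> + int \<alpha> * d + int j)))"
  proof (rule sum.cong[OF refl])
    fix j assume "j \<in> {..i}"
    then have "nat (m + int i + d - d - (m + int j)) = i - j" by simp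
    moreover have "fls_nth F (m + int j) = pcoeff d p j \<alpha> \<beta>"
      unfolding pcoeff_def F_def m_def ..
    ultimately show "fls_nth F (m + int j) * poly (p (nat (m + int i + d - d - (m + int j)))) (of_int (m + int j))
      = pcoeff d p j \<alpha> \<beta> * poly (p (i - j)) (of_int (\<beta> + int \<alpha> * d + int j))"
      unfolding m_def by simp
  qed
  finally show ?thesis .
qed

lemma pcoeff_0: "pcoeff d p i 0 \<beta> = (if i = 0 then 1 else 0)"
  by (simp add: pcoeff_def)

lemma pcoeff_formula:
  assumes "p 0 = 1"
  shows "pcoeff d p i \<alpha> \<beta> = (if i = 0 then 1 else 0) +
    (\<Sum>a<\<alpha>. \<Sum>j<i. pcoeff d p j a \<beta> * poly (p (i - j)) (of_int (\<beta> + int a * d + int j)))"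
proof (induction \<alpha>)
  case 0 then show ?case by (simp add: pcoeff_0)
next
  case (Suc \<alpha>)
  have "{..i} = insert i {..<i}" by auto
  then have "pcoeff d p i (Suc \<alpha>) \<beta> = pcoeff d p i \<alpha> \<beta> +
      (\<Sum>j<i. pcoeff d p j \<alpha> \<beta> * poly (p (i - j)) (of_int (\<beta> + int \<alpha> * d + int j)))"
    by (simp add: pcoeff_Suc assms)
  then show ?case using Suc by simp
qed

theorem lemma7p1:
  fixes d :: int and p :: "nat \<Rightarrow> 'a::field_char_0 poly"
  assumes "p 0 = 1"
  shows "\<forall>i. \<exists>(N::nat) (c :: nat \<Rightarrow> nat \<Rightarrow> 'a). \<forall>(\<alpha>::nat) (\<beta>::int).
           pcoeff d p i \<alpha> \<beta> = (\<Sum>a\<le>N. \<Sum>b\<le>N. c a b * of_nat \<alpha> ^ a * of_int \<beta> ^ b)"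
proof
  fix i
  have "bipoly (\<lambda>\<alpha> \<beta>. pcoeff d p i \<alpha> \<beta>)"
  proof (induction i rule: less_induct)
    case (less i)
    have h: "bipoly (\<lambda>a \<beta>. \<Sum>j<i. pcoeff d p j a \<beta> * poly (p (i - j)) (of_int \<beta> + of_nat a * of_int d + of_nat j))"
    proof (rule bipoly_sum)
      fix j assume "j \<in> {..<i}"
      then have "bipoly (\<lambda>a \<beta>. pcoeff d p j a \<beta>)" using less by simp
      moreover have "bipoly (\<lambda>a \<beta>. poly (p (i - j)) (of_int \<beta> + of_nat a * of_int d + of_nat j))"
        by (intro bipoly_poly bipoly_add bipoly_mult bipoly_y bipoly_x bipoly_const)
      ultimately show "bipoly (\<lambda>a \<beta>. pcoeff d p j a \<beta> * poly (p (i - j)) (of_int \<beta> + of_nat a * of_int d + of_nat j))"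
        by (rule bipoly_mult)
    qed simp
    have "bipoly (\<lambda>\<alpha> \<beta>. (if i = 0 then 1 else 0) + (\<Sum>a<\<alpha>. \<Sum>j<i. pcoeff d p j a \<beta> * poly (p (i - j)) (of_int \<beta> + of_nat a * of_int d + of_nat j)))"
      by (intro bipoly_add bipoly_const bipoly_summation[OF h])
    then show ?case
      by (rule bipoly_cong, subst pcoeff_formula[where p=p, OF assms], simp)
  qed
  then show "\<exists>(N::nat) (c :: nat \<Rightarrow> nat \<Rightarrow> 'a). \<forall>(\<alpha>::nat) (\<beta>::int).
           pcoeff d p i \<alpha> \<beta> = (\<Sum>a\<le>N. \<Sum>b\<le>N. c a b * of_nat \<alpha> ^ a * of_int \<beta> ^ b)"
    by (rule bipoly_nf)
qed

end
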